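(* There is a first-order formula $\Psi_{\mathrm{tran}}(x,y)$ in the language $\{\le,[1]+[1]\}$ such that for all $\sigma,\pi\in\mathcal P$, $$\mathbf Y^*\models\Psi_{\mathrm{tran}}(\sigma,\pi)\iff \pi=[\#\sigma].$$
   Context: $\mathcal P$ is the set of all integer partitions, including the empty partition $\emptyset$; a partition is a nonincreasing finite sequence of positive integers (its parts). $[n]$ denotes the partition with a single part $n$ (with $[0]=\emptyset$), and $m[n]$ the partition with exactly $m$ parts equal to $n$. Every nonempty partition has a unique canonical representation $\sigma=\sum_{i=1}^k m_i[n_i]$ with $n_1>\dots>n_k\ge1$, meaning part $n_i$ occurs exactly $m_i\ge1$ times. Let $p_1=2,p_2=3,p_3=5,\dots$ enumerate the primes. Define $\#:\mathcal P\to\mathbb N$ by $\#\emptyset=0$; $\#(m[1])=p_1^{m-1}$ for $m\ge1$; and $\#\sigma=\prod_{i=1}^k p_{n_i}^{m_i}$ if $\sigma=\sum_{i=1}^k m_i[n_i]$ has some part $n_i\ne1$. (This is a bijection.) Young's lattice $\mathbf Y=\langle\mathcal P,\le\rangle$ has $(s_1,\dots,s_r)\le(n_1,\dots,n_t)$ iff $r\le t$ and $s_i\le n_i$ for all $i\le r$; $\mathbf Y^*$ is $\mathbf Y$ with a constant symbol interpreted as the partition $[1]+[1]=(1,1)$. *)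

theory Defs
  imports "HOL-Computational_Algebra.Primes" "HOL-Library.Infinite_Set"
begin

definition is_partition :: "nat list \<Rightarrow> bool" where
  "is_partition xs \<longleftrightarrow> sorted_wrt (\<ge>) xs \<and> (\<forall>x\<in>set xs. 0 < x)"

definition single_part :: "nat \<Rightarrow> nat list" where
  "single_part n = (if n = 0 then [] else [n])"

text \<open>The n-th prime, 1-indexed: p_1 = 2, p_2 = 3, ...\<close>
definition nth_prime :: "nat \<Rightarrow> nat" where
  "nth_prime n = enumerate {p::nat. prime p} (n - 1)"

definition code :: "nat list \<Rightarrow> nat" where
  "code \<sigma> = (if \<sigma> = [] then 0
             else if (\<forall>x\<in>set \<sigma>. x = 1) then 2 ^ (length \<sigma> - 1)
             else prod_list (map nth_prime \<sigma>))"

definition young_le :: "nat list \<Rightarrow> nat list \<Rightarrow> bool" where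
  "young_le s n \<longleftrightarrow> length s \<le> length n \<and> (\<forall>i<length s. s ! i \<le> n ! i)"

text \<open>First-order logic over the language {\<le>, c} with equality,
  where the constant c is interpreted as [1]+[1] = (1,1).\<close>
datatype tm = Var nat | Const

datatype fm = Le tm tm | Eq tm tm | FFalse | Neg fm | Conj fm fm | Disj fm fm
  | Imp fm fm | Ex nat fm | All nat fm

fun tm_fv :: "tm \<Rightarrow> nat set" where
  "tm_fv (Var v) = {v}"
| "tm_fv Const = {}"

fun fv :: "fm \<Rightarrow> nat set" where
  "fv (Le s t) = tm_fv s \<union> tm_fv t"
| "fv (Eq s t) = tm_fv s \<union> tm_fv t"
| "fv FFalse = {}"
| "fv (Neg \<phi>) = fv \<phi>"
| "fv (Conj \<phi> \<psi>) = fv \<phi> \<union> fv \<psi>"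
| "fv (Disj \<phi> \<psi>) = fv \<phi> \<union> fv \<psi>"
| "fv (Imp \<phi> \<psi>) = fv \<phi> \<union> fv \<psi>"
| "fv (Ex x \<phi>) = fv \<phi> - {x}"
| "fv (All x \<phi>) = fv \<phi> - {x}"

fun tm_eval :: "(nat \<Rightarrow> nat list) \<Rightarrow> tm \<Rightarrow> nat list" where
  "tm_eval e (Var v) = e v"
| "tm_eval e Const = [1, 1]"

fun sat :: "(nat \<Rightarrow> nat list) \<Rightarrow> fm \<Rightarrow> bool" where
  "sat e (Le s t) = young_le (tm_eval e s) (tm_eval e t)"
| "sat e (Eq s t) = (tm_eval e s = tm_eval e t)"
| "sat e FFalse = False"
| "sat e (Neg \<phi>) = (\<not> sat e \<phi>)"
| "sat e (Conj \<phi> \<psi>) = (sat e \<phi> \<and> sat e \<psi>)"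
| "sat e (Disj \<phi> \<psi>) = (sat e \<phi> \<or> sat e \<psi>)"
| "sat e (Imp \<phi> \<psi>) = (sat e \<phi> \<longrightarrow> sat e \<psi>)"
| "sat e (Ex x \<phi>) = (\<exists>\<sigma>. is_partition \<sigma> \<and> sat (e(x := \<sigma>)) \<phi>)"
| "sat e (All x \<phi>) = (\<forall>\<sigma>. is_partition \<sigma> \<longrightarrow> sat (e(x := \<sigma>)) \<phi>)"

end

theory Submission imports Defs begin

definition wfe :: "(nat \<Rightarrow> nat list) \<Rightarrow> bool" where
  "wfe e \<longleftrightarrow> (\<forall>v. is_partition (e v))"
definition isrow :: "nat list \<Rightarrow> bool" where "isrow x \<longleftrightarrow> length x \<le> 1"
definition iscol :: "nat list \<Rightarrow> bool" where "iscol x \<longleftrightarrow> (\<forall>a\<in>set x. a = 1)"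
definition rv :: "nat list \<Rightarrow> nat" where "rv x = sum_list x"
definition pt :: "nat list \<Rightarrow> nat \<Rightarrow> nat" where
  "pt x i = (if 1 \<le> i \<and> i \<le> length x then x ! (i - 1) else 0)"

lemma wf_upd[simp]: "wfe e \<Longrightarrow> is_partition s \<Longrightarrow> wfe (e(b := s))"
  by (simp add: wfe_def)
lemma wf_if[simp]: "wfe e \<Longrightarrow> is_partition s \<Longrightarrow> wfe (\<lambda>a. if a = b then s else e a)"
  by (simp add: wfe_def)
lemma wfD[simp]: "wfe e \<Longrightarrow> is_partition (e v)"
  by (simp add: wfe_def)

lemma yl_Nil[simp]: "young_le [] y" "young_le x [] \<longleftrightarrow> x = []"
  by (auto simp: young_le_def)

lemma yl_refl[simp]: "young_le x x" by (simp add: young_le_def)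
lemma yl_trans: "young_le x y \<Longrightarrow> young_le y z \<Longrightarrow> young_le x z"
  unfolding young_le_def by (meson le_trans less_le_trans order.strict_trans2)
lemma yl_antisym: "young_le x y \<Longrightarrow> young_le y x \<Longrightarrow> x = y"
  by (auto simp: young_le_def intro!: nth_equalityI) (meson le_antisym)

lemma part_pos: "is_partition x \<Longrightarrow> i < length x \<Longrightarrow> 0 < x ! i"
  by (simp add: is_partition_def)
lemma part_sorted: "is_partition x \<Longrightarrow> i \<le> j \<Longrightarrow> j < length x \<Longrightarrow> x ! j \<le> x ! i"
  unfolding is_partition_def
  by (metis antisym_conv1 order_refl sorted_wrt_nth_less)

lemma part_single[simp]: "is_partition (single_part n)"
  by (simp add: is_partition_def single_part_def)
lemma sp_nil[simp]: "single_part n = [] \<longleftrightarrow> n = 0" by (simp add: single_part_def)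
lemma row1[simp]: "isrow [x]" "rv [x] = x" by (auto simp: isrow_def rv_def)
lemma part_one[simp]: "is_partition [Suc 0]" by (simp add: is_partition_def)
lemma part_Nil[simp]: "is_partition []" by (simp add: is_partition_def)
lemma part_rep[simp]: "is_partition (replicate n (Suc 0))"
  by (simp add: is_partition_def sorted_wrt_iff_nth_less)
lemma part_rep2: "0 < k \<Longrightarrow> is_partition (replicate n k)"
  by (simp add: is_partition_def sorted_wrt_iff_nth_less)

lemma row_eq: "is_partition x \<Longrightarrow> isrow x \<Longrightarrow> x = single_part (rv x)"
  unfolding isrow_def rv_def single_part_def is_partition_def
  by (cases x) auto
lemma row_single[simp]: "isrow (single_part n)" "rv (single_part n) = n"
  by (auto simp: isrow_def rv_def single_part_def)
lemma col_eq: "iscol x \<Longrightarrow> x = replicate (length x) 1"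
  unfolding iscol_def by (simp add: replicate_length_same)
lemma col_rep[simp]: "iscol (replicate n (Suc 0))"
  by (simp add: iscol_def)

lemma yl_single: "is_partition y \<Longrightarrow>
   young_le (single_part m) y \<longleftrightarrow> m = 0 \<or> (y \<noteq> [] \<and> m \<le> hd y)"
  by (cases y) (auto simp: young_le_def single_part_def)
lemma yl_rows: "is_partition x \<Longrightarrow> isrow x \<Longrightarrow> is_partition y \<Longrightarrow> isrow y \<Longrightarrow>
   young_le x y \<longleftrightarrow> rv x \<le> rv y"
  unfolding isrow_def rv_def is_partition_def young_le_def
  by (cases x; cases y) auto

lemma part_hd: "is_partition x \<Longrightarrow> a \<in> set x \<Longrightarrow> a \<le> hd x"
proof -
  assume p: "is_partition x" and a: "a \<in> set x"
  then obtain i where i: "i < length x" "a = x ! i" by (auto simp: in_set_conv_nth)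
  then have "x ! i \<le> x ! 0" using part_sorted[OF p, of 0 i] by simp
  moreover have "hd x = x ! 0" using i by (cases x) auto
  ultimately show ?thesis using i by simp
qed

lemma yl_sr[simp]: "is_partition y \<Longrightarrow> isrow y \<Longrightarrow> young_le (single_part m) y \<longleftrightarrow> m \<le> rv y"
  by (metis row_eq row_single part_single yl_rows)
lemma yl_rs[simp]: "is_partition y \<Longrightarrow> isrow y \<Longrightarrow> young_le y (single_part m) \<longleftrightarrow> rv y \<le> m"
  by (metis row_eq row_single part_single yl_rows)
lemma eq_sr[simp]: "is_partition y \<Longrightarrow> isrow y \<Longrightarrow> (single_part m = y) \<longleftrightarrow> m = rv y"
  by (metis row_eq row_single(2))
lemma eq_rr: "is_partition x \<Longrightarrow> isrow x \<Longrightarrow> is_partition y \<Longrightarrow> isrow y \<Longrightarrow> (x = y) \<longleftrightarrow> rv x = rv y"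
  by (metis row_eq)
lemma yl_rr: "is_partition x \<Longrightarrow> isrow x \<Longrightarrow> is_partition y \<Longrightarrow> isrow y \<Longrightarrow> young_le x y \<longleftrightarrow> rv x \<le> rv y"
  by (rule yl_rows)

lemma yl_cy[simp]: "is_partition y \<Longrightarrow> young_le (replicate j (Suc 0)) y \<longleftrightarrow> j \<le> length y"
  unfolding young_le_def using part_pos by (auto simp: Suc_le_eq)
lemma yl_yc[simp]: "is_partition y \<Longrightarrow> young_le y (replicate j (Suc 0)) \<longleftrightarrow> iscol y \<and> length y \<le> j"
proof -
  assume p: "is_partition y"
  have h: "\<And>i. i < length y \<Longrightarrow> y!i \<le> Suc 0 \<longleftrightarrow> y!i = 1"
  proof -
    fix i assume "i < length y"
    then have "0 < y!i" by (rule part_pos[OF p])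
    then show "y!i \<le> Suc 0 \<longleftrightarrow> y!i = 1" by auto
  qed
  show ?thesis by (auto simp: young_le_def iscol_def all_set_conv_all_nth h)
qed
lemma yl_cc: "iscol x \<Longrightarrow> is_partition y \<Longrightarrow> young_le x y \<longleftrightarrow> length x \<le> length y"
  by (metis col_eq yl_cy length_replicate One_nat_def)
lemma eq_cc: "iscol x \<Longrightarrow> iscol y \<Longrightarrow> x = y \<longleftrightarrow> length x = length y"
  by (metis col_eq)

lemma all_rows: "(\<forall>s. is_partition s \<longrightarrow> isrow s \<longrightarrow> P s) \<longleftrightarrow> (\<forall>n. P (single_part n))"
  by (metis row_eq part_single row_single(1))
lemma ex_rows: "(\<exists>s. is_partition s \<and> isrow s \<and> P s) \<longleftrightarrow> (\<exists>n. P (single_part n))"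
  by (metis row_eq part_single row_single(1))
lemma all_cols: "(\<forall>s. is_partition s \<longrightarrow> iscol s \<longrightarrow> P s) \<longleftrightarrow> (\<forall>n. P (replicate n (Suc 0)))"
  by (metis col_eq part_rep col_rep One_nat_def)
lemma ex_cols: "(\<exists>s. is_partition s \<and> iscol s \<and> P s) \<longleftrightarrow> (\<exists>n. P (replicate n (Suc 0)))"
  by (metis col_eq part_rep col_rep One_nat_def)

definition fBot :: "nat \<Rightarrow> nat \<Rightarrow> fm" where "fBot x b = All b (Le (Var x) (Var b))"
definition fAtom :: "nat \<Rightarrow> nat \<Rightarrow> fm" where
  "fAtom x b = Conj (Neg (fBot x b)) (All b (Imp (Le (Var b) (Var x)) (Disj (Eq (Var b) (Var x)) (fBot b (Suc b)))))"
definition fRow :: "nat \<Rightarrow> fm" where "fRow x = Neg (Le Const (Var x))"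
definition fCol :: "nat \<Rightarrow> nat \<Rightarrow> fm" where
  "fCol x b = All b (Imp (Conj (fRow b) (Le (Var b) (Var x))) (Disj (fBot b (Suc b)) (fAtom b (Suc b))))"
definition fIff :: "fm \<Rightarrow> fm \<Rightarrow> fm" where "fIff p q = Conj (Imp p q) (Imp q p)"
definition fLt :: "nat \<Rightarrow> nat \<Rightarrow> fm" where "fLt u v = Conj (Le (Var u) (Var v)) (Neg (Eq (Var u) (Var v)))"

lemma sat_Iff[simp]: "sat e (fIff p q) \<longleftrightarrow> (sat e p \<longleftrightarrow> sat e q)"
  by (auto simp: fIff_def)
lemma sat_Lt[simp]: "sat e (fLt u v) \<longleftrightarrow> young_le (e u) (e v) \<and> e u \<noteq> e v"
  by (simp add: fLt_def)

lemma part_rep_cons[simp]: "is_partition (Suc 0 # replicate n (Suc 0))"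
  using part_rep[of "Suc n"] by simp
lemma col_rep_cons[simp]: "iscol (Suc 0 # replicate n (Suc 0))"
  by (simp add: iscol_def)
lemma sem_Bot[simp]: "wfe e \<Longrightarrow> x < b \<Longrightarrow> sat e (fBot x b) \<longleftrightarrow> e x = []"
  by (auto simp: fBot_def dest: spec[of _ "[]"])

lemma sem_Row[simp]: "wfe e \<Longrightarrow> sat e (fRow x) \<longleftrightarrow> isrow (e x)"
proof -
  assume "wfe e"
  then have p: "is_partition (e x)" by simp
  have "young_le [1,1] (e x) \<longleftrightarrow> 2 \<le> length (e x)"
  proof -
    have "2 \<le> length (e x) \<Longrightarrow> 0 < e x ! 0 \<and> 0 < e x ! 1" 
    proof -
      assume "2 \<le> length (e x)"
      then have "0 < length (e x)" "1 < length (e x)" by auto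
      then show ?thesis using part_pos[OF p, of 0] part_pos[OF p, of 1] by blast
    qed
    then show ?thesis by (auto simp: young_le_def less_Suc_eq Suc_le_eq)
  qed
  then show ?thesis by (auto simp: fRow_def isrow_def)
qed

lemma sem_Atom[simp]: "wfe e \<Longrightarrow> x < b \<Longrightarrow> sat e (fAtom x b) \<longleftrightarrow> e x = [1]"
proof -
  assume w: "wfe e" "x < b"
  then have p: "is_partition (e x)" by simp
  have "sat e (fAtom x b) \<longleftrightarrow> e x \<noteq> [] \<and> (\<forall>s. is_partition s \<longrightarrow> young_le s (e x) \<longrightarrow> s = e x \<or> s = [])"
    using w by (simp add: fAtom_def)
  also have "\<dots> \<longleftrightarrow> e x = [1]"
  proof
    assume a: "e x \<noteq> [] \<and> (\<forall>s. is_partition s \<longrightarrow> young_le s (e x) \<longrightarrow> s = e x \<or> s = [])"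
    have "0 < hd (e x)" using a p by (auto simp: is_partition_def)
    then have "young_le (single_part 1) (e x)" using a unfolding yl_single[OF p] by simp
    then have "single_part 1 = e x \<or> single_part 1 = []" using a part_single by blast
    then show "e x = [1]" by (simp add: single_part_def)
  next
    assume "e x = [1]"
    then show "e x \<noteq> [] \<and> (\<forall>s. is_partition s \<longrightarrow> young_le s (e x) \<longrightarrow> s = e x \<or> s = [])"
    proof (intro conjI allI impI)
      fix s assume "is_partition s" "young_le s (e x)"
      then show "s = e x \<or> s = []" using \<open>e x = [1]\<close>
        by (cases s) (auto simp: young_le_def is_partition_def)
    qed simp
  qed
  finally show ?thesis .
qed

lemma sp01: "(single_part n = [] \<or> single_part n = [1]) \<longleftrightarrow> n \<le> 1"
  by (auto simp: single_part_def)

lemma sem_Col[simp]: "wfe e \<Longrightarrow> x < b \<Longrightarrow> sat e (fCol x b) \<longleftrightarrow> iscol (e x)"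
proof -
  assume w: "wfe e" "x < b"
  then have p: "is_partition (e x)" by simp
  have "sat e (fCol x b) \<longleftrightarrow> (\<forall>s. is_partition s \<longrightarrow> isrow s \<longrightarrow> young_le s (e x) \<longrightarrow> s = [] \<or> s = [1])"
    using w by (auto simp: fCol_def)
  also have "\<dots> \<longleftrightarrow> (\<forall>n. young_le (single_part n) (e x) \<longrightarrow> single_part n = [] \<or> single_part n = [1])"
    by (rule all_rows)
  also have "\<dots> \<longleftrightarrow> (\<forall>n. n = 0 \<or> (e x \<noteq> [] \<and> n \<le> hd (e x)) \<longrightarrow> n \<le> 1)"
    unfolding yl_single[OF p] sp01 by blast
  also have "\<dots> \<longleftrightarrow> (e x = [] \<or> hd (e x) \<le> 1)"
    by (cases "e x = []") (auto dest: spec[of _ "hd (e x)"])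
  also have "\<dots> \<longleftrightarrow> iscol (e x)"
  proof
    assume h: "e x = [] \<or> hd (e x) \<le> 1"
    show "iscol (e x)" unfolding iscol_def
    proof
      fix a assume a: "a \<in> set (e x)"
      then have "a \<le> hd (e x)" by (rule part_hd[OF p])
      moreover have "0 < a" using a p by (auto simp: is_partition_def)
      ultimately show "a = 1" using h a by auto
    qed
  next
    assume "iscol (e x)"
    then show "e x = [] \<or> hd (e x) \<le> 1" unfolding iscol_def
      by (cases "e x") auto
  qed
  finally show ?thesis .
qed

definition fRowSucc :: "nat \<Rightarrow> nat \<Rightarrow> nat \<Rightarrow> fm" where
  "fRowSucc u v b = Conj (fLt u v) (All b (Imp (fRow b) (Disj (Le (Var b) (Var u)) (Le (Var v) (Var b)))))"

lemma sem_RowSucc[simp]: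
  assumes w: "wfe e" "u < b" "v < b" "isrow (e u)" "isrow (e v)"
  shows "sat e (fRowSucc u v b) \<longleftrightarrow> rv (e v) = Suc (rv (e u))"
proof -
  have "sat e (fRowSucc u v b) \<longleftrightarrow> rv (e u) \<le> rv (e v) \<and> rv (e u) \<noteq> rv (e v) \<and>
     (\<forall>s. is_partition s \<longrightarrow> isrow s \<longrightarrow> young_le s (e u) \<or> young_le (e v) s)"
    using w by (simp add: fRowSucc_def yl_rr eq_rr)
  also have "\<dots> \<longleftrightarrow> rv (e u) \<le> rv (e v) \<and> rv (e u) \<noteq> rv (e v) \<and> (\<forall>n. n \<le> rv (e u) \<or> rv (e v) \<le> n)"
    using all_rows[of "\<lambda>s. young_le s (e u) \<or> young_le (e v) s"] w by simp
  also have "\<dots> \<longleftrightarrow> rv (e v) = Suc (rv (e u))"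
    by (auto dest: spec[of _ "Suc (rv (e u))"])
  finally show ?thesis .
qed

definition fColSucc :: "nat \<Rightarrow> nat \<Rightarrow> nat \<Rightarrow> fm" where
  "fColSucc i j b = Conj (fCol i b) (Conj (fCol j b) (Conj (fLt i j)
     (All b (Imp (fCol b (Suc b)) (Disj (Le (Var b) (Var i)) (Le (Var j) (Var b)))))))"

lemma sem_ColSucc[simp]:
  assumes w: "wfe e" "i < b" "j < b"
  shows "sat e (fColSucc i j b) \<longleftrightarrow> iscol (e i) \<and> iscol (e j) \<and> length (e j) = Suc (length (e i))"
proof (cases "iscol (e i) \<and> iscol (e j)")
  case True
  have "sat e (fColSucc i j b) \<longleftrightarrow> length (e i) \<le> length (e j) \<and> length (e i) \<noteq> length (e j) \<and>
     (\<forall>s. is_partition s \<longrightarrow> iscol s \<longrightarrow> young_le s (e i) \<or> young_le (e j) s)"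
    using w True by (simp add: fColSucc_def yl_cc eq_cc)
  also have "\<dots> \<longleftrightarrow> length (e i) \<le> length (e j) \<and> length (e i) \<noteq> length (e j) \<and> (\<forall>n. n \<le> length (e i) \<or> length (e j) \<le> n)"
    using all_cols[of "\<lambda>s. young_le s (e i) \<or> young_le (e j) s"] w True by (simp add: yl_cc)
  also have "\<dots> \<longleftrightarrow> length (e j) = Suc (length (e i))"
    by (auto dest: spec[of _ "Suc (length (e i))"])
  finally show ?thesis using True by simp
next
  case False
  then show ?thesis using w by (auto simp: fColSucc_def)
qed

definition fLenLe :: "nat \<Rightarrow> nat \<Rightarrow> nat \<Rightarrow> fm" where
  "fLenLe y c b = All b (Imp (Conj (fCol b (Suc b)) (Le (Var b) (Var y))) (Le (Var b) (Var c)))"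

lemma sem_LenLe[simp]:
  assumes w: "wfe e" "y < b" "c < b" "iscol (e c)"
  shows "sat e (fLenLe y c b) \<longleftrightarrow> length (e y) \<le> length (e c)"
proof -
  have "sat e (fLenLe y c b) \<longleftrightarrow> (\<forall>s. is_partition s \<longrightarrow> iscol s \<longrightarrow> young_le s (e y) \<longrightarrow> young_le s (e c))"
    using w by (auto simp: fLenLe_def)
  also have "\<dots> \<longleftrightarrow> (\<forall>n. n \<le> length (e y) \<longrightarrow> n \<le> length (e c))"
    using all_cols[of "\<lambda>s. young_le s (e y) \<longrightarrow> young_le s (e c)"] w by simp
  also have "\<dots> \<longleftrightarrow> length (e y) \<le> length (e c)" by auto
  finally show ?thesis .
qed

definition fHeadLe :: "nat \<Rightarrow> nat \<Rightarrow> nat \<Rightarrow> fm" where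
  "fHeadLe y r b = All b (Imp (Conj (fRow b) (Le (Var b) (Var y))) (Le (Var b) (Var r)))"

lemma sem_HeadLe[simp]:
  assumes w: "wfe e" "y < b" "r < b" "isrow (e r)"
  shows "sat e (fHeadLe y r b) \<longleftrightarrow> (\<forall>a\<in>set (e y). a \<le> rv (e r))"
proof -
  have p: "is_partition (e y)" using w by simp
  have "sat e (fHeadLe y r b) \<longleftrightarrow> (\<forall>s. is_partition s \<longrightarrow> isrow s \<longrightarrow> young_le s (e y) \<longrightarrow> young_le s (e r))"
    using w by (auto simp: fHeadLe_def)
  also have "\<dots> \<longleftrightarrow> (\<forall>n. young_le (single_part n) (e y) \<longrightarrow> n \<le> rv (e r))"
    using all_rows[of "\<lambda>s. young_le s (e y) \<longrightarrow> young_le s (e r)"] w by simp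
  also have "\<dots> \<longleftrightarrow> (\<forall>n. n = 0 \<or> (e y \<noteq> [] \<and> n \<le> hd (e y)) \<longrightarrow> n \<le> rv (e r))"
    unfolding yl_single[OF p] ..
  also have "\<dots> \<longleftrightarrow> (e y = [] \<or> hd (e y) \<le> rv (e r))"
    by (cases "e y = []") (auto dest: spec[of _ "hd (e y)"])
  also have "\<dots> \<longleftrightarrow> (\<forall>a\<in>set (e y). a \<le> rv (e r))"
    using part_hd[OF p] by (cases "e y") (auto, meson le_trans)
  finally show ?thesis .
qed

lemma GE_math:
  assumes p: "is_partition s"
  shows "(\<forall>y. is_partition y \<longrightarrow> length y \<le> i \<and> (\<forall>a\<in>set y. a \<le> k) \<longrightarrow> young_le y s)
     \<longleftrightarrow> (i = 0 \<or> k \<le> pt s i)"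
proof
  assume h: "\<forall>y. is_partition y \<longrightarrow> length y \<le> i \<and> (\<forall>a\<in>set y. a \<le> k) \<longrightarrow> young_le y s"
  show "i = 0 \<or> k \<le> pt s i"
  proof (cases "i = 0 \<or> k = 0")
    case True then show ?thesis by auto
  next
    case False
    then have "young_le (replicate i k) s" using h part_rep2[of k i] by auto
    then have "i \<le> length s \<and> k \<le> s ! (i - 1)" using False
      by (auto simp: young_le_def)
    then show ?thesis using False by (simp add: pt_def)
  qed
next
  assume h: "i = 0 \<or> k \<le> pt s i"
  show "\<forall>y. is_partition y \<longrightarrow> length y \<le> i \<and> (\<forall>a\<in>set y. a \<le> k) \<longrightarrow> young_le y s"
  proof (intro allI impI)
    fix y assume y: "is_partition y" "length y \<le> i \<and> (\<forall>a\<in>set y. a \<le> k)"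
    show "young_le y s"
    proof (cases "y = []")
      case True then show ?thesis by simp
    next
      case False
      then have "0 < y ! 0" "y ! 0 \<le> k" using y part_pos[OF y(1), of 0] by auto
      then have k: "0 < k" by simp
      have i0: "0 < i" using y False by (cases i) auto
      then have ks: "i \<le> length s" "k \<le> s ! (i - 1)" using h k by (auto simp: pt_def split: if_splits)
      show ?thesis unfolding young_le_def
      proof (intro conjI allI impI)
        show "length y \<le> length s" using y ks by simp
        fix j assume j: "j < length y"
        have ji: "j \<le> i - 1" "i - 1 < length s" using j y ks i0 by auto
        have "y ! j \<le> k" using y j by auto
        also have "k \<le> s ! (i - 1)" by (rule ks)
        also have "s ! (i - 1) \<le> s ! j" using part_sorted[OF p ji] .
        finally show "y ! j \<le> s ! j" .
      qed
    qed
  qed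
qed

definition fGE :: "nat \<Rightarrow> nat \<Rightarrow> nat \<Rightarrow> nat \<Rightarrow> fm" where
  "fGE s c r b = All b (Imp (Conj (fLenLe b c (Suc b)) (fHeadLe b r (Suc b))) (Le (Var b) (Var s)))"

lemma sem_GE[simp]:
  assumes w: "wfe e" "s < b" "c < b" "r < b" "iscol (e c)" "isrow (e r)"
  shows "sat e (fGE s c r b) \<longleftrightarrow> length (e c) = 0 \<or> rv (e r) \<le> pt (e s) (length (e c))"
proof -
  have "sat e (fGE s c r b) \<longleftrightarrow> (\<forall>y. is_partition y \<longrightarrow> length y \<le> length (e c) \<and> (\<forall>a\<in>set y. a \<le> rv (e r)) \<longrightarrow> young_le y (e s))"
    using w by (simp add: fGE_def)
  also have "\<dots> \<longleftrightarrow> length (e c) = 0 \<or> rv (e r) \<le> pt (e s) (length (e c))"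
    by (rule GE_math) (use w in simp)
  finally show ?thesis .
qed

definition fPart :: "nat \<Rightarrow> nat \<Rightarrow> nat \<Rightarrow> nat \<Rightarrow> fm" where
  "fPart s c r b = Conj (fRow r) (All b (Imp (fRow b) (fIff (fGE s c b (Suc b)) (Le (Var b) (Var r)))))"

lemma sem_Part[simp]:
  assumes w: "wfe e" "s < b" "c < b" "r < b" "iscol (e c)"
  shows "sat e (fPart s c r b) \<longleftrightarrow> isrow (e r) \<and> 1 \<le> length (e c) \<and> rv (e r) = pt (e s) (length (e c))"
proof (cases "isrow (e r)")
  case True
  have "sat e (fPart s c r b) \<longleftrightarrow> (\<forall>x. is_partition x \<longrightarrow> isrow x \<longrightarrow>
      ((length (e c) = 0 \<or> rv x \<le> pt (e s) (length (e c))) \<longleftrightarrow> rv x \<le> rv (e r)))"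
    using w True by (simp add: fPart_def yl_rr)
  also have "\<dots> \<longleftrightarrow> (\<forall>n. (length (e c) = 0 \<or> n \<le> pt (e s) (length (e c))) \<longleftrightarrow> n \<le> rv (e r))"
    using all_rows[of "\<lambda>x. (length (e c) = 0 \<or> rv x \<le> pt (e s) (length (e c))) \<longleftrightarrow> rv x \<le> rv (e r)"] by simp
  also have "\<dots> \<longleftrightarrow> 1 \<le> length (e c) \<and> rv (e r) = pt (e s) (length (e c))"
  proof
    assume h: "\<forall>n. (length (e c) = 0 \<or> n \<le> pt (e s) (length (e c))) \<longleftrightarrow> n \<le> rv (e r)"
    have l0: "length (e c) \<noteq> 0" using h[rule_format, of "Suc (rv (e r))"] by auto
    moreover have "rv (e r) \<le> pt (e s) (length (e c))" using h[rule_format, of "rv (e r)"] l0 by auto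
    moreover have "pt (e s) (length (e c)) \<le> rv (e r)" using h[rule_format, of "pt (e s) (length (e c))"] by auto
    ultimately show "1 \<le> length (e c) \<and> rv (e r) = pt (e s) (length (e c))" by linarith
  next
    assume h: "1 \<le> length (e c) \<and> rv (e r) = pt (e s) (length (e c))"
    then have "length (e c) \<noteq> 0" by linarith
    then show "\<forall>n. (length (e c) = 0 \<or> n \<le> pt (e s) (length (e c))) \<longleftrightarrow> n \<le> rv (e r)"
      using h by simp
  qed
  finally show ?thesis using True by simp
next
  case False
  then show ?thesis using w by (simp add: fPart_def)
qed

definition fLenEq :: "nat \<Rightarrow> nat \<Rightarrow> nat \<Rightarrow> fm" where
  "fLenEq x c b = All b (Imp (fCol b (Suc b)) (fIff (Le (Var b) (Var x)) (Le (Var b) (Var c))))"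

lemma sem_LenEq[simp]:
  assumes w: "wfe e" "x < b" "c < b" "iscol (e c)"
  shows "sat e (fLenEq x c b) \<longleftrightarrow> length (e x) = length (e c)"
proof -
  have "sat e (fLenEq x c b) \<longleftrightarrow> (\<forall>s. is_partition s \<longrightarrow> iscol s \<longrightarrow> (young_le s (e x) \<longleftrightarrow> young_le s (e c)))"
    using w by (auto simp: fLenEq_def)
  also have "\<dots> \<longleftrightarrow> (\<forall>n. n \<le> length (e x) \<longleftrightarrow> n \<le> length (e c))"
    using all_cols[of "\<lambda>s. young_le s (e x) \<longleftrightarrow> young_le s (e c)"] w by simp
  also have "\<dots> \<longleftrightarrow> length (e x) = length (e c)" by (metis le_antisym order_refl)
  finally show ?thesis .
qed

definition fSeq :: "nat \<Rightarrow> nat \<Rightarrow> nat \<Rightarrow> (nat \<Rightarrow> nat \<Rightarrow> nat \<Rightarrow> nat \<Rightarrow> fm) \<Rightarrow> nat \<Rightarrow> fm" where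
  "fSeq x L s R b = Conj (fLenEq x L b) (Conj (fPart x L s b)
     (All b (All (b+1) (All (b+2) (All (b+3) (Imp
        (Conj (fColSucc b (b+1) (b+4)) (Conj (Le (Var (b+1)) (Var L))
           (Conj (fPart x (b+1) (b+2) (b+4)) (fPart x b (b+3) (b+4)))))
        (R b (b+2) (b+3) (b+4))))))))"

lemma block_eq:
  "(\<forall>s1. is_partition s1 \<longrightarrow> (\<forall>s2. is_partition s2 \<longrightarrow> (\<forall>s3. is_partition s3 \<longrightarrow> (\<forall>s4. is_partition s4 \<longrightarrow>
          (iscol s1 \<and> iscol s2 \<and> length s2 = Suc (length s1) \<and> Suc (length s1) \<le> N \<and>
           isrow s3 \<and> rv s3 = f (Suc (length s1)) \<and> isrow s4 \<and> 1 \<le> length s1 \<and> rv s4 = f (length s1))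
          \<longrightarrow> Q (length s1) (f (Suc (length s1))) (f (length s1))))))
   \<longleftrightarrow> (\<forall>j. 1 \<le> j \<longrightarrow> j < N \<longrightarrow> Q j (f (Suc j)) (f j))"
proof
  assume h: "\<forall>s1. is_partition s1 \<longrightarrow> (\<forall>s2. is_partition s2 \<longrightarrow> (\<forall>s3. is_partition s3 \<longrightarrow> (\<forall>s4. is_partition s4 \<longrightarrow>
          (iscol s1 \<and> iscol s2 \<and> length s2 = Suc (length s1) \<and> Suc (length s1) \<le> N \<and>
           isrow s3 \<and> rv s3 = f (Suc (length s1)) \<and> isrow s4 \<and> 1 \<le> length s1 \<and> rv s4 = f (length s1))
          \<longrightarrow> Q (length s1) (f (Suc (length s1))) (f (length s1)))))"
  show "\<forall>j. 1 \<le> j \<longrightarrow> j < N \<longrightarrow> Q j (f (Suc j)) (f j)"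
  proof (intro allI impI)
    fix j assume "1 \<le> j" "j < N"
    then show "Q j (f (Suc j)) (f j)"
      using h[rule_format, of "replicate j (Suc 0)" "replicate (Suc j) (Suc 0)" "single_part (f (Suc j))" "single_part (f j)"]
        part_rep[of "Suc j"] col_rep[of "Suc j"]
      by simp
  qed
qed auto

lemma sem_Seq:
  assumes w: "wfe e" "x < b" "L < b" "s < b" "iscol (e L)"
    and R: "\<And>e'. wfe e' \<Longrightarrow> (\<forall>w<b. e' w = e w) \<Longrightarrow> iscol (e' b) \<Longrightarrow> isrow (e' (Suc (Suc b))) \<Longrightarrow>
       isrow (e' (b+3)) \<Longrightarrow> 1 \<le> length (e' b) \<Longrightarrow> length (e' b) < length (e L) \<Longrightarrow>
       sat e' (R b (Suc (Suc b)) (b+3) (b+4)) \<longleftrightarrow> Q (length (e' b)) (rv (e' (Suc (Suc b)))) (rv (e' (b+3)))"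
  shows "sat e (fSeq x L s R b) \<longleftrightarrow> length (e x) = length (e L) \<and> isrow (e s) \<and> 1 \<le> length (e L)
     \<and> rv (e s) = pt (e x) (length (e L))
     \<and> (\<forall>j. 1 \<le> j \<longrightarrow> j < length (e L) \<longrightarrow> Q j (pt (e x) (Suc j)) (pt (e x) j))"
proof -
  have "sat e (fSeq x L s R b) \<longleftrightarrow> length (e x) = length (e L) \<and> isrow (e s) \<and> 1 \<le> length (e L)
     \<and> rv (e s) = pt (e x) (length (e L))
     \<and> (\<forall>s1. is_partition s1 \<longrightarrow> (\<forall>s2. is_partition s2 \<longrightarrow> (\<forall>s3. is_partition s3 \<longrightarrow> (\<forall>s4. is_partition s4 \<longrightarrow>
          (iscol s1 \<and> iscol s2 \<and> length s2 = Suc (length s1) \<and> Suc (length s1) \<le> length (e L) \<and>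
           isrow s3 \<and> rv s3 = pt (e x) (Suc (length s1)) \<and> isrow s4 \<and> 1 \<le> length s1 \<and> rv s4 = pt (e x) (length s1))
          \<longrightarrow> Q (length s1) (pt (e x) (Suc (length s1))) (pt (e x) (length s1))))))"
    using w by (simp add: fSeq_def yl_cc R cong: conj_cong)
  then show ?thesis unfolding block_eq .
qed

primrec itv :: "(nat \<Rightarrow> nat \<Rightarrow> nat) \<Rightarrow> nat \<Rightarrow> nat \<Rightarrow> nat \<Rightarrow> nat" where
  "itv f L s 0 = s"
| "itv f L s (Suc k) = f (L - Suc k) (itv f L s k)"

lemma itv_mono: "(\<And>j u. u \<le> f j u) \<Longrightarrow> k \<le> k' \<Longrightarrow> itv f L s k \<le> itv f L s k'"
proof (induction k' arbitrary: k)
  case 0 then show ?case by simp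
next
  case (Suc k')
  show ?case
  proof (cases "k = Suc k'")
    case False
    then have "itv f L s k \<le> itv f L s k'" using Suc by simp
    also have "\<dots> \<le> itv f L s (Suc k')" using Suc.prems(1) by simp
    finally show ?thesis .
  qed simp
qed

lemma seq_unique:
  assumes "length x = L" "s = pt x L"
    and st: "\<forall>j. 1 \<le> j \<longrightarrow> j < L \<longrightarrow> pt x j = f j (pt x (Suc j))"
  shows "k < L \<Longrightarrow> pt x (L - k) = itv f L s k"
proof (induction k)
  case 0 then show ?case using assms by simp
next
  case (Suc k)
  have "pt x (L - Suc k) = f (L - Suc k) (pt x (Suc (L - Suc k)))"
    using st Suc.prems by auto
  also have "Suc (L - Suc k) = L - k" using Suc.prems by simp
  finally show ?case using Suc by simp
qed

definition seqlist :: "(nat \<Rightarrow> nat \<Rightarrow> nat) \<Rightarrow> nat \<Rightarrow> nat \<Rightarrow> nat list" where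
  "seqlist f L s = map (\<lambda>i. itv f L s (L - 1 - i)) [0..<L]"

lemma seqlist_props:
  assumes mono: "\<And>j u. u \<le> f j u" and s: "1 \<le> s" and L: "1 \<le> L"
  shows "is_partition (seqlist f L s)" "length (seqlist f L s) = L" "pt (seqlist f L s) L = s"
    "\<forall>j. 1 \<le> j \<longrightarrow> j < L \<longrightarrow> pt (seqlist f L s) j = f j (pt (seqlist f L s) (Suc j))"
proof -
  have pos: "1 \<le> itv f L s k" for k
  proof -
    have "itv f L s 0 \<le> itv f L s k" by (rule itv_mono[OF mono]) simp
    then show ?thesis using s by simp
  qed
  show "is_partition (seqlist f L s)"
    unfolding is_partition_def
  proof
    show "sorted_wrt (\<ge>) (seqlist f L s)"
      unfolding sorted_wrt_iff_nth_less
    proof (intro allI impI)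
      fix i j assume "i < j" "j < length (seqlist f L s)"
      then show "seqlist f L s ! j \<le> seqlist f L s ! i"
        by (simp add: seqlist_def itv_mono[OF mono])
    qed
    show "\<forall>x\<in>set (seqlist f L s). 0 < x"
      using pos by (auto simp: seqlist_def Suc_le_eq)
  qed
  show "length (seqlist f L s) = L" by (simp add: seqlist_def)
  have ptv: "\<And>j. 1 \<le> j \<Longrightarrow> j \<le> L \<Longrightarrow> pt (seqlist f L s) j = itv f L s (L - j)"
  proof -
    fix j assume j: "1 \<le> j" "j \<le> L"
    then have "j - 1 < L" by simp
    then have "[0..<L] ! (j - 1) = j - 1" by simp
    then show "pt (seqlist f L s) j = itv f L s (L - j)"
      using j by (simp add: pt_def seqlist_def)
  qed
  show "pt (seqlist f L s) L = s" using ptv[of L] L by simp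
  show "\<forall>j. 1 \<le> j \<longrightarrow> j < L \<longrightarrow> pt (seqlist f L s) j = f j (pt (seqlist f L s) (Suc j))"
  proof (intro allI impI)
    fix j assume j: "1 \<le> j" "j < L"
    have "L - j = Suc (L - Suc j)" using j by simp
    then have "itv f L s (L - j) = f (L - Suc (L - Suc j)) (itv f L s (L - Suc j))" by simp
    also have "L - Suc (L - Suc j) = j" using j by simp
    finally show "pt (seqlist f L s) j = f j (pt (seqlist f L s) (Suc j))"
      using ptv[of j] ptv[of "Suc j"] j by simp
  qed
qed

lemma seq_iff:
  assumes mono: "\<And>j u. u \<le> f j u" and s: "1 \<le> s" and L: "1 \<le> L"
  shows "(\<exists>x. is_partition x \<and> length x = L \<and> s = pt x L \<and>
            (\<forall>j. 1 \<le> j \<longrightarrow> j < L \<longrightarrow> pt x j = f j (pt x (Suc j))) \<and> r = pt x 1)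
         \<longleftrightarrow> r = itv f L s (L - 1)"
proof
  assume "\<exists>x. is_partition x \<and> length x = L \<and> s = pt x L \<and>
            (\<forall>j. 1 \<le> j \<longrightarrow> j < L \<longrightarrow> pt x j = f j (pt x (Suc j))) \<and> r = pt x 1"
  then obtain x where x: "length x = L" "s = pt x L"
     "\<forall>j. 1 \<le> j \<longrightarrow> j < L \<longrightarrow> pt x j = f j (pt x (Suc j))" "r = pt x 1" by blast
  have "pt x (L - (L - 1)) = itv f L s (L - 1)" using seq_unique[of x L s f "L - 1", OF x(1,2,3)] L by simp
  then show "r = itv f L s (L - 1)" using x L by simp
next
  assume "r = itv f L s (L - 1)"
  then show "\<exists>x. is_partition x \<and> length x = L \<and> s = pt x L \<and>
            (\<forall>j. 1 \<le> j \<longrightarrow> j < L \<longrightarrow> pt x j = f j (pt x (Suc j))) \<and> r = pt x 1"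
  proof (intro exI[of _ "seqlist f L s"] conjI)
    note sp = seqlist_props[OF mono s L]
    have "pt (seqlist f L s) (L - (L - 1)) = itv f L s (L - 1)"
      by (rule seq_unique[of "seqlist f L s" L s f "L - 1"]) (use sp L in auto)
    then show "r = pt (seqlist f L s) 1" using L \<open>r = _\<close> by simp
  qed (use seqlist_props[OF mono s L] in auto)
qed

definition fIter :: "nat \<Rightarrow> nat \<Rightarrow> nat \<Rightarrow> (nat \<Rightarrow> nat \<Rightarrow> nat \<Rightarrow> nat \<Rightarrow> fm) \<Rightarrow> nat \<Rightarrow> fm" where
  "fIter L s r R b = Ex b (Conj (fSeq b L s R (Suc b))
      (Ex (Suc b) (Conj (fAtom (Suc b) (Suc (Suc b))) (fPart b (Suc b) r (Suc (Suc b))))))"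

lemma sem_Iter:
  assumes w: "wfe e" "L < b" "s < b" "r < b" "iscol (e L)" "1 \<le> length (e L)" "isrow (e s)"
     "1 \<le> rv (e s)" "isrow (e r)"
    and mono: "\<And>j u. u \<le> f j u"
    and R: "\<And>e'. wfe e' \<Longrightarrow> (\<forall>w<b. e' w = e w) \<Longrightarrow> iscol (e' (Suc b)) \<Longrightarrow>
       isrow (e' (Suc (Suc (Suc b)))) \<Longrightarrow> isrow (e' (Suc b + 3)) \<Longrightarrow> 1 \<le> length (e' (Suc b)) \<Longrightarrow>
       length (e' (Suc b)) < length (e L) \<Longrightarrow>
       sat e' (R (Suc b) (Suc (Suc (Suc b))) (Suc b + 3) (Suc b + 4)) \<longleftrightarrow>
         rv (e' (Suc b + 3)) = f (length (e' (Suc b))) (rv (e' (Suc (Suc (Suc b)))))"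
  shows "sat e (fIter L s r R b) \<longleftrightarrow> rv (e r) = itv f (length (e L)) (rv (e s)) (length (e L) - 1)"
proof -
  have S: "sat (e(b:=\<sigma>)) (fSeq b L s R (Suc b)) \<longleftrightarrow> length \<sigma> = length (e L) \<and> rv (e s) = pt \<sigma> (length (e L))
     \<and> (\<forall>j. 1 \<le> j \<longrightarrow> j < length (e L) \<longrightarrow> pt \<sigma> j = f j (pt \<sigma> (Suc j)))"
    if p: "is_partition \<sigma>" for \<sigma>
  proof -
    have "sat (e(b:=\<sigma>)) (fSeq b L s R (Suc b)) \<longleftrightarrow> length ((e(b:=\<sigma>)) b) = length ((e(b:=\<sigma>)) L) \<and> isrow ((e(b:=\<sigma>)) s) \<and> 1 \<le> length ((e(b:=\<sigma>)) L)
     \<and> rv ((e(b:=\<sigma>)) s) = pt ((e(b:=\<sigma>)) b) (length ((e(b:=\<sigma>)) L))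
     \<and> (\<forall>j. 1 \<le> j \<longrightarrow> j < length ((e(b:=\<sigma>)) L) \<longrightarrow> (\<lambda>j u v. v = f j u) j (pt ((e(b:=\<sigma>)) b) (Suc j)) (pt ((e(b:=\<sigma>)) b) j))"
    proof (rule sem_Seq)
      fix e' assume a: "wfe e'" "\<forall>w<Suc b. e' w = (e(b := \<sigma>)) w" "iscol (e' (Suc b))"
        "isrow (e' (Suc (Suc (Suc b))))" "isrow (e' (Suc b + 3))" "1 \<le> length (e' (Suc b))"
        "length (e' (Suc b)) < length ((e(b := \<sigma>)) L)"
      have ag: "\<forall>w<b. e' w = e w" using a(2) by auto
      have "length (e' (Suc b)) < length (e L)" using a(7) w by simp
      then show "sat e' (R (Suc b) (Suc (Suc (Suc b))) (Suc b + 3) (Suc b + 4)) \<longleftrightarrow>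
        (\<lambda>j u v. v = f j u) (length (e' (Suc b))) (rv (e' (Suc (Suc (Suc b))))) (rv (e' (Suc b + 3)))"
        using R[OF a(1) ag a(3) a(4) a(5) a(6)] by simp
    qed (use w p in simp_all)
    then show ?thesis using w by simp
  qed
  have P: "(\<exists>u. is_partition u \<and> u = [1] \<and> sat (e(b:=\<sigma>, Suc b := u)) (fPart b (Suc b) r (Suc (Suc b))))
     \<longleftrightarrow> rv (e r) = pt \<sigma> 1"
    if p: "is_partition \<sigma>" for \<sigma>
  proof -
    have "sat (e(b:=\<sigma>, Suc b := [1])) (fPart b (Suc b) r (Suc (Suc b))) \<longleftrightarrow> rv (e r) = pt \<sigma> 1"
      using w p by (simp add: iscol_def is_partition_def)
    then show ?thesis by (auto simp: is_partition_def)
  qed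
  have "sat e (fIter L s r R b) \<longleftrightarrow> (\<exists>\<sigma>. is_partition \<sigma> \<and> sat (e(b:=\<sigma>)) (fSeq b L s R (Suc b)) \<and>
      (\<exists>u. is_partition u \<and> u = [1] \<and> sat (e(b:=\<sigma>, Suc b := u)) (fPart b (Suc b) r (Suc (Suc b)))))"
    using w by (simp add: fIter_def cong: conj_cong)
  also have "\<dots> \<longleftrightarrow> (\<exists>\<sigma>. is_partition \<sigma> \<and> length \<sigma> = length (e L) \<and> rv (e s) = pt \<sigma> (length (e L))
     \<and> (\<forall>j. 1 \<le> j \<longrightarrow> j < length (e L) \<longrightarrow> pt \<sigma> j = f j (pt \<sigma> (Suc j))) \<and> rv (e r) = pt \<sigma> 1)"
    using S P by blast
  also have "\<dots> \<longleftrightarrow> rv (e r) = itv f (length (e L)) (rv (e s)) (length (e L) - 1)"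
    by (rule seq_iff[OF mono w(8) w(6)])
  finally show ?thesis .
qed

lemma Iter_len:
  assumes w: "wfe e" "L < b" "s < b" "iscol (e L)" and "sat e (fIter L s r R b)"
  shows "1 \<le> length (e L)"
  using assms by (auto simp: fIter_def fSeq_def)

lemma sem_Iter2:
  assumes w: "wfe e" "L < b" "s < b" "r < b" "iscol (e L)" "isrow (e s)"
     "1 \<le> rv (e s)" "isrow (e r)"
    and mono: "\<And>j u. u \<le> f j u"
    and R: "\<And>e'. wfe e' \<Longrightarrow> (\<forall>w<b. e' w = e w) \<Longrightarrow> iscol (e' (Suc b)) \<Longrightarrow>
       isrow (e' (Suc (Suc (Suc b)))) \<Longrightarrow> isrow (e' (Suc b + 3)) \<Longrightarrow> 1 \<le> length (e' (Suc b)) \<Longrightarrow>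
       length (e' (Suc b)) < length (e L) \<Longrightarrow>
       sat e' (R (Suc b) (Suc (Suc (Suc b))) (Suc b + 3) (Suc b + 4)) \<longleftrightarrow>
         rv (e' (Suc b + 3)) = f (length (e' (Suc b))) (rv (e' (Suc (Suc (Suc b)))))"
  shows "sat e (fIter L s r R b) \<longleftrightarrow> 1 \<le> length (e L) \<and> rv (e r) = itv f (length (e L)) (rv (e s)) (length (e L) - 1)"
proof (cases "1 \<le> length (e L)")
  case True
  show ?thesis using sem_Iter[where e=e and L=L and b=b and s=s and r=r and f=f and R=R, OF w(1-5) True w(6-8) mono R] True by blast
next
  case False
  then show ?thesis using Iter_len[OF w(1-3,5)] by blast
qed

abbreviation "RS \<equiv> (\<lambda>i u v b'. fRowSucc u v b')"

lemma sem_IterSucc[simp]: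
  assumes w: "wfe e" "L < b" "s < b" "r < b" "iscol (e L)" "isrow (e s)"
     "1 \<le> rv (e s)" "isrow (e r)"
  shows "sat e (fIter L s r RS b) \<longleftrightarrow> 1 \<le> length (e L) \<and> rv (e r) = rv (e s) + (length (e L) - 1)"
proof -
  have i: "itv (\<lambda>j u. Suc u) N x k = x + k" for N x k by (induction k) auto
  show ?thesis
    by (subst sem_Iter2[OF w, where f="\<lambda>j u. Suc u"]) (auto simp: i)
qed

definition fBridge :: "nat \<Rightarrow> nat \<Rightarrow> nat \<Rightarrow> fm" where
  "fBridge r L b = Ex b (Conj (fAtom b (Suc b)) (fIter L b r RS (Suc b)))"

lemma sem_Bridge[simp]:
  assumes w: "wfe e" "r < b" "L < b" "iscol (e L)" "isrow (e r)"
  shows "sat e (fBridge r L b) \<longleftrightarrow> 1 \<le> length (e L) \<and> rv (e r) = length (e L)"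
proof -
  have "sat e (fBridge r L b) \<longleftrightarrow> sat (e(b := [1])) (fIter L b r RS (Suc b))"
    using w by (simp add: fBridge_def cong: conj_cong)
  also have "\<dots> \<longleftrightarrow> 1 \<le> length (e L) \<and> rv (e r) = length (e L)"
    using w by (auto simp: isrow_def rv_def)
  finally show ?thesis .
qed

definition fAdd :: "nat \<Rightarrow> nat \<Rightarrow> nat \<Rightarrow> nat \<Rightarrow> fm" where
  "fAdd a y z b = Disj (Conj (fBot y b) (Eq (Var z) (Var a)))
     (Conj (Neg (fBot y b)) (Ex b (Conj (fCol b (Suc b)) (Conj (fBridge y b (Suc b))
        (Ex (Suc b) (Conj (fRow (Suc b)) (Conj (fRowSucc a (Suc b) (Suc (Suc b)))
          (fIter b (Suc b) z RS (Suc (Suc b))))))))))"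

lemma sem_Add[simp]:
  assumes w: "wfe e" "a < b" "y < b" "z < b" "isrow (e a)" "isrow (e y)" "isrow (e z)"
  shows "sat e (fAdd a y z b) \<longleftrightarrow> rv (e z) = rv (e a) + rv (e y)"
proof (cases "e y = []")
  case True
  then have "rv (e y) = 0" by (simp add: rv_def)
  then show ?thesis using w True by (simp add: fAdd_def eq_rr)
next
  case False
  then have y1: "1 \<le> rv (e y)" using w row_eq[of "e y"]
    by (metis One_nat_def Suc_leI gr0I single_part_def wfD)
  have "sat e (fAdd a y z b) \<longleftrightarrow> (\<exists>L. is_partition L \<and> iscol L \<and> (1 \<le> length L \<and> rv (e y) = length L) \<and>
      (\<exists>t. is_partition t \<and> isrow t \<and> rv t = Suc (rv (e a)) \<and>
         (1 \<le> length L \<and> rv (e z) = rv t + (length L - 1))))"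
    using w False by (simp add: fAdd_def cong: conj_cong)
  also have "\<dots> \<longleftrightarrow> (\<exists>n. (1 \<le> n \<and> rv (e y) = n) \<and>
      (\<exists>m. m = Suc (rv (e a)) \<and> (1 \<le> n \<and> rv (e z) = m + (n - 1))))"
    unfolding ex_cols ex_rows by simp
  also have "\<dots> \<longleftrightarrow> rv (e z) = rv (e a) + rv (e y)" using y1 by auto
  finally show ?thesis .
qed

lemma row_nil: "is_partition x \<Longrightarrow> isrow x \<Longrightarrow> x = [] \<longleftrightarrow> rv x = 0"
  by (metis row_eq row_single(2) single_part_def)
lemma row_one: "is_partition x \<Longrightarrow> isrow x \<Longrightarrow> x = [Suc 0] \<longleftrightarrow> rv x = 1"
  by (metis row_eq row_single(2) single_part_def One_nat_def one_neq_zero)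

abbreviation "AS a \<equiv> (\<lambda>i u v b'. fAdd a u v b')"

lemma sem_IterAdd[simp]:
  assumes w: "wfe e" "L < b" "s < b" "r < b" "a < b" "iscol (e L)" "isrow (e s)"
     "1 \<le> rv (e s)" "isrow (e r)" "isrow (e a)"
  shows "sat e (fIter L s r (AS a) b) \<longleftrightarrow> 1 \<le> length (e L) \<and> rv (e r) = rv (e s) + (length (e L) - 1) * rv (e a)"
proof -
  have i: "itv (\<lambda>j u. A + u) N x k = x + k * A" for A N x k by (induction k) auto
  show ?thesis
    by (subst sem_Iter2[OF w(1-4,6-9), where f="\<lambda>j u. rv (e a) + u"]) (use w in \<open>auto simp: i\<close>)
qed

definition fMult :: "nat \<Rightarrow> nat \<Rightarrow> nat \<Rightarrow> nat \<Rightarrow> fm" where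
  "fMult a y z b = Disj (Conj (Disj (fBot a b) (fBot y b)) (fBot z b))
     (Conj (Neg (fBot a b)) (Conj (Neg (fBot y b)) (Ex b (Conj (fCol b (Suc b))
        (Conj (fBridge y b (Suc b)) (fIter b a z (AS a) (Suc b)))))))"

lemma sem_Mult[simp]:
  assumes w: "wfe e" "a < b" "y < b" "z < b" "isrow (e a)" "isrow (e y)" "isrow (e z)"
  shows "sat e (fMult a y z b) \<longleftrightarrow> rv (e z) = rv (e a) * rv (e y)"
proof (cases "rv (e a) = 0 \<or> rv (e y) = 0")
  case True
  then show ?thesis using w by (auto simp: fMult_def row_nil)
next
  case False
  then have a1: "1 \<le> rv (e a)" by simp
  have "sat e (fMult a y z b) \<longleftrightarrow> (\<exists>L. is_partition L \<and> iscol L \<and> (1 \<le> length L \<and> rv (e y) = length L) \<and>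
      (1 \<le> length L \<and> rv (e z) = rv (e a) + (length L - 1) * rv (e a)))"
    using w False a1 by (simp add: fMult_def row_nil cong: conj_cong)
  also have "\<dots> \<longleftrightarrow> (\<exists>n. (1 \<le> n \<and> rv (e y) = n) \<and> (1 \<le> n \<and> rv (e z) = rv (e a) + (n - 1) * rv (e a)))"
    unfolding ex_cols by simp
  also have "\<dots> \<longleftrightarrow> rv (e z) = rv (e a) * rv (e y)" using False
    by (cases "rv (e y)") (auto simp: algebra_simps)
  finally show ?thesis .
qed

lemma prime_mult_iff: "prime (p::nat) \<longleftrightarrow> p \<noteq> 0 \<and> p \<noteq> 1 \<and> (\<forall>m n. p = m * n \<longrightarrow> m = 1 \<or> n = 1)"
proof
  assume p: "prime p"
  show "p \<noteq> 0 \<and> p \<noteq> 1 \<and> (\<forall>m n. p = m * n \<longrightarrow> m = 1 \<or> n = 1)"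
  proof (intro conjI allI impI)
    fix m n assume "p = m * n"
    then have "m dvd p" by simp
    then have "m = 1 \<or> m = p" using p by (simp add: prime_nat_iff)
    then show "m = 1 \<or> n = 1" using \<open>p = m * n\<close> p by auto
  qed (use p in auto)
next
  assume h: "p \<noteq> 0 \<and> p \<noteq> 1 \<and> (\<forall>m n. p = m * n \<longrightarrow> m = 1 \<or> n = 1)"
  show "prime p" unfolding prime_nat_iff
  proof (intro conjI allI impI)
    show "1 < p" using h by simp
    fix m assume "m dvd p"
    then obtain k where "p = m * k" by auto
    then show "m = 1 \<or> m = p" using h by auto
  qed
qed

lemma all_rows2: "(\<forall>s1. is_partition s1 \<longrightarrow> (\<forall>s2. is_partition s2 \<longrightarrow> isrow s1 \<and> isrow s2 \<and> P (rv s1) (rv s2) \<longrightarrow> Q (rv s1) (rv s2)))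
  \<longleftrightarrow> (\<forall>m n. P m n \<longrightarrow> Q m n)"
  by (metis part_single row_single)

definition fPrime :: "nat \<Rightarrow> nat \<Rightarrow> fm" where
  "fPrime q b = Conj (fRow q) (Conj (Neg (fBot q b)) (Conj (Neg (fAtom q b))
     (All b (All (Suc b) (Imp (Conj (fRow b) (Conj (fRow (Suc b)) (fMult b (Suc b) q (Suc (Suc b)))))
        (Disj (fAtom b (Suc (Suc b))) (fAtom (Suc b) (Suc (Suc b)))))))))"

lemma sem_Prime[simp]:
  assumes w: "wfe e" "q < b"
  shows "sat e (fPrime q b) \<longleftrightarrow> isrow (e q) \<and> prime (rv (e q))"
proof (cases "isrow (e q)")
  case True
  have "sat e (fPrime q b) \<longleftrightarrow> rv (e q) \<noteq> 0 \<and> rv (e q) \<noteq> 1 \<and>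
     (\<forall>s1. is_partition s1 \<longrightarrow> (\<forall>s2. is_partition s2 \<longrightarrow> isrow s1 \<and> isrow s2 \<and> (\<lambda>m n. rv (e q) = m * n) (rv s1) (rv s2)
        \<longrightarrow> (\<lambda>m n. m = 1 \<or> n = 1) (rv s1) (rv s2)))"
    using w True by (simp add: fPrime_def row_nil row_one cong: conj_cong)
  also have "\<dots> \<longleftrightarrow> prime (rv (e q))"
    using all_rows2[of "\<lambda>m n. rv (e q) = m * n" "\<lambda>m n. m = 1 \<or> n = 1"] prime_mult_iff[of "rv (e q)"] by simp
  finally show ?thesis using True by simp
next
  case False
  then show ?thesis using w by (simp add: fPrime_def)
qed

lemma card_below_enum:
  assumes inf: "infinite (S::nat set)"
  shows "card {p \<in> S. p < enumerate S n} = n"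
proof -
  have "{p \<in> S. p < enumerate S n} = enumerate S ` {..<n}"
  proof
    show "{p \<in> S. p < enumerate S n} \<subseteq> enumerate S ` {..<n}"
    proof
      fix p assume p: "p \<in> {p \<in> S. p < enumerate S n}"
      then obtain k where k: "enumerate S k = p" using enumerate_Ex[OF inf] by blast
      then have "k < n" using p inf by auto
      then show "p \<in> enumerate S ` {..<n}" using k by auto
    qed
    show "enumerate S ` {..<n} \<subseteq> {p \<in> S. p < enumerate S n}"
      using inf by (auto intro: enumerate_in_set)
  qed
  moreover have "inj_on (enumerate S) {..<n}" using inj_enumerate[OF inf] by (simp add: inj_on_def inj_def)
  ultimately show ?thesis by (simp add: card_image)
qed

lemma nth_prime_char:
  assumes A: "1 \<le> A"
  shows "(prime Q \<and> card {p. prime p \<and> p < Q} + 1 = A) \<longleftrightarrow> Q = nth_prime A"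
proof -
  let ?S = "{p::nat. prime p}"
  have inf: "infinite ?S" by (rule primes_infinite)
  have c: "card {p. prime p \<and> p < enumerate ?S n} = n" for n
    using card_below_enum[OF inf, of n] by simp
  show ?thesis
  proof
    assume h: "prime Q \<and> card {p. prime p \<and> p < Q} + 1 = A"
    then obtain m where m: "enumerate ?S m = Q" using enumerate_Ex[OF inf, of Q] by auto
    then have "m + 1 = A" using h c[of m] by simp
    then have "A - 1 = m" by simp
    then show "Q = nth_prime A" using m by (simp add: nth_prime_def)
  next
    assume "Q = nth_prime A"
    then have Q: "Q = enumerate ?S (A - 1)" by (simp add: nth_prime_def)
    then have "prime Q" using enumerate_in_set[OF inf] by auto
    then show "prime Q \<and> card {p. prime p \<and> p < Q} + 1 = A" using c[of "A - 1"] Q A by simp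
  qed
qed

lemma nth_prime_prime: "prime (nth_prime n)"
  using enumerate_in_set[OF primes_infinite] by (simp add: nth_prime_def)

lemma sat_All_col:
  assumes "wfe e" "b < c"
  shows "sat e (All b (Imp (fCol b c) \<phi>)) \<longleftrightarrow> (\<forall>n. sat (e(b := replicate n (Suc 0))) \<phi>)"
proof -
  have "sat e (All b (Imp (fCol b c) \<phi>)) \<longleftrightarrow> (\<forall>s. is_partition s \<longrightarrow> iscol s \<longrightarrow> sat (e(b := s)) \<phi>)"
    using assms by simp
  also have "\<dots> \<longleftrightarrow> (\<forall>n. sat (e(b := replicate n (Suc 0))) \<phi>)" by (rule all_cols)
  finally show ?thesis .
qed
lemma sat_Ex_col:
  assumes "wfe e" "b < c"
  shows "sat e (Ex b (Conj (fCol b c) \<phi>)) \<longleftrightarrow> (\<exists>n. sat (e(b := replicate n (Suc 0))) \<phi>)"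
proof -
  have "sat e (Ex b (Conj (fCol b c) \<phi>)) \<longleftrightarrow> (\<exists>s. is_partition s \<and> iscol s \<and> sat (e(b := s)) \<phi>)"
    using assms by (simp cong: conj_cong)
  also have "\<dots> \<longleftrightarrow> (\<exists>n. sat (e(b := replicate n (Suc 0))) \<phi>)" by (rule ex_cols)
  finally show ?thesis .
qed
lemma sat_All_row:
  assumes "wfe e"
  shows "sat e (All b (Imp (fRow b) \<phi>)) \<longleftrightarrow> (\<forall>n. sat (e(b := single_part n)) \<phi>)"
proof -
  have "sat e (All b (Imp (fRow b) \<phi>)) \<longleftrightarrow> (\<forall>s. is_partition s \<longrightarrow> isrow s \<longrightarrow> sat (e(b := s)) \<phi>)"
    using assms by simp
  also have "\<dots> \<longleftrightarrow> (\<forall>n. sat (e(b := single_part n)) \<phi>)" by (rule all_rows)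
  finally show ?thesis .
qed
lemma sat_Ex_row:
  assumes "wfe e"
  shows "sat e (Ex b (Conj (fRow b) \<phi>)) \<longleftrightarrow> (\<exists>n. sat (e(b := single_part n)) \<phi>)"
proof -
  have "sat e (Ex b (Conj (fRow b) \<phi>)) \<longleftrightarrow> (\<exists>s. is_partition s \<and> isrow s \<and> sat (e(b := s)) \<phi>)"
    using assms by (simp cong: conj_cong)
  also have "\<dots> \<longleftrightarrow> (\<exists>n. sat (e(b := single_part n)) \<phi>)" by (rule ex_rows)
  finally show ?thesis .
qed

lemma sat_Ex_atom:
  assumes "wfe e" "b < c"
  shows "sat e (Ex b (Conj (fAtom b c) \<phi>)) \<longleftrightarrow> sat (e(b := [Suc 0])) \<phi>"
  using assms by (auto simp: is_partition_def cong: conj_cong)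

lemmas qsimps = sat_Ex_atom sat_All_col sat_Ex_col sat_All_row sat_Ex_row
lemmas sat_noq = sat.simps(1-7)

definition fPL1 :: "nat \<Rightarrow> nat \<Rightarrow> nat \<Rightarrow> fm" where
  "fPL1 y q b = All b (Imp (fCol b (Suc (Suc b))) (All (Suc b) (Imp (fRow (Suc b))
     (Imp (Conj (fPart y b (Suc b) (Suc (Suc b))) (Neg (fBot (Suc b) (Suc (Suc b)))))
          (Conj (fPrime (Suc b) (Suc (Suc b))) (fLt (Suc b) q))))))"

lemma sem_PL1[simp]:
  assumes w: "wfe e" "y < b" "q < b" "isrow (e q)"
  shows "sat e (fPL1 y q b) \<longleftrightarrow> (\<forall>n m. (1 \<le> n \<and> m = pt (e y) n) \<and> m \<noteq> 0 \<longrightarrow> prime m \<and> m < rv (e q))"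
  using w by (simp add: fPL1_def qsimps del: sat.simps(8,9)) (auto dest: le_neq_implies_less)

definition fPL2 :: "nat \<Rightarrow> nat \<Rightarrow> fm" where
  "fPL2 y b = All b (Imp (fCol b (b+3)) (All (Suc b) (Imp (fCol (Suc b) (b+3)) (All (Suc (Suc b)) (Imp (fRow (Suc (Suc b)))
     (Imp (Conj (fPart y b (Suc (Suc b)) (b+3)) (Conj (fPart y (Suc b) (Suc (Suc b)) (b+3)) (Neg (fBot (Suc (Suc b)) (b+3)))))
       (Eq (Var b) (Var (Suc b)))))))))"

lemma sem_PL2[simp]:
  assumes w: "wfe e" "y < b"
  shows "sat e (fPL2 y b) \<longleftrightarrow> (\<forall>n1 n2 m. (1 \<le> n1 \<and> m = pt (e y) n1) \<and> (1 \<le> n2 \<and> m = pt (e y) n2) \<and> m \<noteq> 0 \<longrightarrow> n1 = n2)"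
  using w by (simp add: fPL2_def qsimps del: sat.simps(8,9))

definition fPL3 :: "nat \<Rightarrow> nat \<Rightarrow> nat \<Rightarrow> fm" where
  "fPL3 y q b = All b (Imp (fRow b) (Imp (Conj (fPrime b (Suc b)) (fLt b q))
     (Ex (Suc b) (Conj (fCol (Suc b) (Suc (Suc b))) (fPart y (Suc b) b (Suc (Suc b)))))))"

lemma sem_PL3[simp]:
  assumes w: "wfe e" "y < b" "q < b" "isrow (e q)"
  shows "sat e (fPL3 y q b) \<longleftrightarrow> (\<forall>m. prime m \<and> m < rv (e q) \<longrightarrow> (\<exists>n. 1 \<le> n \<and> m = pt (e y) n))"
  using w by (simp add: fPL3_def qsimps del: sat.simps(8,9)) (auto dest: le_neq_implies_less)

lemma pt_nz: "is_partition y \<Longrightarrow> 0 < pt y n \<longleftrightarrow> 1 \<le> n \<and> n \<le> length y"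
  by (auto simp: pt_def part_pos)

lemma PL_exists:
  "(\<exists>y. is_partition y \<and> (\<forall>n. Suc 0 \<le> n \<and> 0 < pt y n \<longrightarrow> prime (pt y n) \<and> pt y n < Q) \<and>
      (\<forall>n1 n2. Suc 0 \<le> n1 \<and> Suc 0 \<le> n2 \<and> pt y n1 = pt y n2 \<and> 0 < pt y n2 \<longrightarrow> n1 = n2) \<and>
      (\<forall>m. prime m \<and> m < Q \<longrightarrow> (\<exists>n\<ge>Suc 0. m = pt y n)) \<and> A = Suc (length y))
   \<longleftrightarrow> A = Suc (card {p. prime p \<and> p < Q})" (is "(\<exists>y. ?P y) \<longleftrightarrow> _")
proof
  assume "\<exists>y. ?P y"
  then obtain y where y: "?P y" by blast
  have p: "is_partition y" using y by simp
  have ptn: "pt y (Suc i) = y ! i" if "i < length y" for i using that by (simp add: pt_def)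
  have setq: "set y = {p. prime p \<and> p < Q}"
  proof
    show "set y \<subseteq> {p. prime p \<and> p < Q}"
    proof
      fix a assume "a \<in> set y"
      then obtain i where i: "i < length y" "a = y ! i" by (auto simp: in_set_conv_nth)
      then have "0 < pt y (Suc i)" using pt_nz[OF p] by simp
      then show "a \<in> {p. prime p \<and> p < Q}" using y i ptn[OF i(1)] by (metis mem_Collect_eq Suc_le_mono le0)
    qed
    show "{p. prime p \<and> p < Q} \<subseteq> set y"
    proof
      fix m assume "m \<in> {p. prime p \<and> p < Q}"
      then obtain n where n: "n \<ge> Suc 0" "m = pt y n" using y by blast
      then have "0 < m" using \<open>m \<in> _\<close> prime_gt_0_nat by auto
      then have "1 \<le> n \<and> n \<le> length y" using pt_nz[OF p] n by simp
      then show "m \<in> set y" using n by (simp add: pt_def)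
    qed
  qed
  have "distinct y" unfolding distinct_conv_nth
  proof (intro allI impI)
    fix i j assume ij: "i < length y" "j < length y" "i \<noteq> j"
    show "y ! i \<noteq> y ! j"
    proof
      assume eq: "y ! i = y ! j"
      have "0 < pt y (Suc j)" using pt_nz[OF p] ij by simp
      note h2 = y[THEN conjunct2, THEN conjunct2, THEN conjunct1]
      then have "Suc i = Suc j" using h2[rule_format, of "Suc i" "Suc j"] \<open>0 < pt y (Suc j)\<close> eq ptn[OF ij(1)] ptn[OF ij(2)] by simp
      then show False using ij by simp
    qed
  qed
  then have "length y = card {p. prime p \<and> p < Q}" using setq distinct_card by fastforce
  then show "A = Suc (card {p. prime p \<and> p < Q})" using y by simp
next
  assume A: "A = Suc (card {p. prime p \<and> p < Q})"
  let ?S = "{p. prime p \<and> p < Q}"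
  have fin: "finite ?S" by simp
  define y where "y = rev (sorted_list_of_set ?S)"
  have sety: "set y = ?S" using fin by (simp add: y_def)
  have dy: "distinct y" by (simp add: y_def)
  have p: "is_partition y"
    unfolding is_partition_def
  proof
    have "sorted_wrt (<) (sorted_list_of_set ?S)" by simp
    then have "sorted_wrt (\<le>) (sorted_list_of_set ?S)" by (rule sorted_wrt_mono_rel[rotated]) auto
    then show "sorted_wrt (\<ge>) y" by (simp add: y_def sorted_wrt_rev)
    show "\<forall>x\<in>set y. 0 < x" using sety prime_gt_0_nat by auto
  qed
  have ptn: "pt y n = y ! (n - 1)" if "1 \<le> n" "n \<le> length y" for n using that by (simp add: pt_def)
  have ly: "length y = card ?S" using dy sety distinct_card by fastforce
  show "\<exists>y. ?P y"
  proof (rule exI[of _ y], intro conjI)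
    show "is_partition y" by (rule p)
    show "A = Suc (length y)" using A ly by simp
    show "\<forall>n. Suc 0 \<le> n \<and> 0 < pt y n \<longrightarrow> prime (pt y n) \<and> pt y n < Q"
    proof (intro allI impI)
      fix n assume n: "Suc 0 \<le> n \<and> 0 < pt y n"
      then have "pt y n \<in> set y" using pt_nz[OF p] ptn by auto
      then show "prime (pt y n) \<and> pt y n < Q" using sety by auto
    qed
    show "\<forall>n1 n2. Suc 0 \<le> n1 \<and> Suc 0 \<le> n2 \<and> pt y n1 = pt y n2 \<and> 0 < pt y n2 \<longrightarrow> n1 = n2"
    proof (intro allI impI)
      fix n1 n2 assume h: "Suc 0 \<le> n1 \<and> Suc 0 \<le> n2 \<and> pt y n1 = pt y n2 \<and> 0 < pt y n2"
      then have "0 < pt y n1" "0 < pt y n2" by auto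
      then have r: "1 \<le> n1" "n1 \<le> length y" "1 \<le> n2" "n2 \<le> length y" using pt_nz[OF p] by auto
      then have "y ! (n1 - 1) = y ! (n2 - 1)" using h ptn[OF r(1,2)] ptn[OF r(3,4)] by simp
      then have "n1 - 1 = n2 - 1" using dy r by (simp add: nth_eq_iff_index_eq)
      then show "n1 = n2" using r by simp
    qed
    show "\<forall>m. prime m \<and> m < Q \<longrightarrow> (\<exists>n\<ge>Suc 0. m = pt y n)"
    proof (intro allI impI)
      fix m assume "prime m \<and> m < Q"
      then have "m \<in> set y" using sety by simp
      then obtain i where i: "i < length y" "m = y ! i" by (auto simp: in_set_conv_nth)
      then show "\<exists>n\<ge>Suc 0. m = pt y n" by (intro exI[of _ "Suc i"]) (simp add: pt_def)
    qed
  qed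
qed

lemma ex2cols: "(\<exists>s. is_partition s \<and> iscol s \<and> length y = length s \<and>
   (\<exists>t. is_partition t \<and> iscol t \<and> length t = Suc (length s) \<and> A = Suc (length s))) \<longleftrightarrow> A = Suc (length y)"
  unfolding ex_cols by auto

definition fNthPrime :: "nat \<Rightarrow> nat \<Rightarrow> nat \<Rightarrow> fm" where
  "fNthPrime a q b = Conj (fPrime q b) (Ex b (Conj (fPL1 b q (Suc b)) (Conj (fPL2 b (Suc b)) (Conj (fPL3 b q (Suc b))
     (Ex (Suc b) (Conj (fCol (Suc b) (Suc (Suc b))) (Conj (fLenEq b (Suc b) (Suc (Suc b)))
       (Ex (Suc (Suc b)) (Conj (fCol (Suc (Suc b)) (b+3)) (Conj (fColSucc (Suc b) (Suc (Suc b)) (b+3)) (fBridge a (Suc (Suc b)) (b+3))))))))))))"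

lemma sem_NthPrime[simp]:
  assumes w: "wfe e" "a < b" "q < b" "isrow (e a)"
  shows "sat e (fNthPrime a q b) \<longleftrightarrow> isrow (e q) \<and> 1 \<le> rv (e a) \<and> rv (e q) = nth_prime (rv (e a))"
proof -
  have "sat e (fNthPrime a q b) \<longleftrightarrow> isrow (e q) \<and> prime (rv (e q)) \<and> rv (e a) = Suc (card {p. prime p \<and> p < rv (e q)})"
    using w by (simp add: fNthPrime_def ex2cols PL_exists cong: conj_cong)
  also have "\<dots> \<longleftrightarrow> isrow (e q) \<and> 1 \<le> rv (e a) \<and> rv (e q) = nth_prime (rv (e a))"
    using nth_prime_char[of "rv (e a)" "rv (e q)"] by auto
  finally show ?thesis .
qed

abbreviation "DS \<equiv> (\<lambda>i u v b'. fAdd u u v b')"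

lemma sem_IterDouble[simp]:
  assumes w: "wfe e" "L < b" "s < b" "r < b" "iscol (e L)" "isrow (e s)"
     "1 \<le> rv (e s)" "isrow (e r)"
  shows "sat e (fIter L s r DS b) \<longleftrightarrow> 1 \<le> length (e L) \<and> rv (e r) = rv (e s) * 2 ^ (length (e L) - 1)"
proof -
  have i: "itv (\<lambda>j u. u + u) N x k = x * 2 ^ k" for N x k by (induction k) auto
  show ?thesis
    by (subst sem_Iter2[OF w, where f="\<lambda>j u. u + u"]) (auto simp: i)
qed

definition fCStep :: "nat \<Rightarrow> nat \<Rightarrow> nat \<Rightarrow> nat \<Rightarrow> fm" where
  "fCStep i u v b = Ex b (Conj (fRow b) (Conj (fPart 0 i b (Suc b)) (Ex (Suc b) (Conj (fRow (Suc b))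
     (Conj (fNthPrime b (Suc b) (Suc (Suc b))) (fMult (Suc b) u v (Suc (Suc b))))))))"

lemma sem_CStep:
  assumes w: "wfe e" "0 < b" "i < b" "u < b" "v < b" "iscol (e i)" "isrow (e u)" "isrow (e v)"
    "1 \<le> length (e i)" "length (e i) \<le> length (e 0)"
  shows "sat e (fCStep i u v b) \<longleftrightarrow> rv (e v) = nth_prime (pt (e 0) (length (e i))) * rv (e u)"
proof -
  have "0 < pt (e 0) (length (e i))" using w pt_nz[of "e 0"] by simp
  then show ?thesis using w by (simp add: fCStep_def qsimps del: sat.simps(8,9))
qed

abbreviation "CS \<equiv> (\<lambda>i u v b'. fCStep i u v b')"

lemma sem_IterC[simp]:
  assumes w: "wfe e" "0 < b" "L < b" "s < b" "r < b" "iscol (e L)" "isrow (e s)"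
     "1 \<le> rv (e s)" "isrow (e r)" "length (e L) \<le> Suc (length (e 0))"
  shows "sat e (fIter L s r CS b) \<longleftrightarrow> 1 \<le> length (e L) \<and>
     rv (e r) = itv (\<lambda>j u. nth_prime (pt (e 0) j) * u) (length (e L)) (rv (e s)) (length (e L) - 1)"
proof -
  have mono: "u \<le> nth_prime (pt (e 0) j) * u" for j u
  proof -
    have "1 \<le> nth_prime (pt (e 0) j)" using prime_gt_0_nat[OF nth_prime_prime] by (simp add: Suc_le_eq)
    then show ?thesis by simp
  qed
  show ?thesis
  proof (rule sem_Iter2[OF w(1,3,4,5,6,7,8,9) mono])
    fix e' assume a: "wfe e'" "\<forall>w<b. e' w = e w" "iscol (e' (Suc b))"
       "isrow (e' (Suc (Suc (Suc b))))" "isrow (e' (Suc b + 3))" "1 \<le> length (e' (Suc b))"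
       "length (e' (Suc b)) < length (e L)"
    have e0: "e' 0 = e 0" using a(2) w(2) by simp
    have "length (e' (Suc b)) \<le> length (e' 0)" using a(7) w(10) e0 by simp
    then show "sat e' (fCStep (Suc b) (Suc (Suc (Suc b))) (Suc b + 3) (Suc b + 4)) \<longleftrightarrow>
         rv (e' (Suc b + 3)) = nth_prime (pt (e 0) (length (e' (Suc b)))) * rv (e' (Suc (Suc (Suc b))))"
      using sem_CStep[OF a(1), of "Suc b + 4" "Suc b" "Suc (Suc (Suc b))" "Suc b + 3"] a e0 by simp
  qed
qed

lemma itv_prod:
  assumes "length \<sigma> = L"
  shows "k \<le> L \<Longrightarrow> itv (\<lambda>j u. nth_prime (pt \<sigma> j) * u) (Suc L) 1 k = prod_list (map nth_prime (drop (L - k) \<sigma>))"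
proof (induction k)
  case 0 then show ?case using assms by simp
next
  case (Suc k)
  have i: "L - Suc k < length \<sigma>" using Suc.prems assms by simp
  have "pt \<sigma> (L - k) = \<sigma> ! (L - Suc k)" using Suc.prems assms by (simp add: pt_def)
  moreover have "drop (L - Suc k) \<sigma> = \<sigma> ! (L - Suc k) # drop (L - k) \<sigma>"
    using Cons_nth_drop_Suc[OF i] Suc.prems by (simp add: Suc_diff_Suc)
  ultimately show ?case using Suc by simp
qed

definition Psi :: fm where
  "Psi = Disj (Conj (fBot 0 2) (fBot 1 2))
     (Disj (Conj (Neg (fBot 0 2)) (Conj (fCol 0 2) (Conj (fRow 1)
        (Ex 2 (Conj (fCol 2 3) (Conj (fLenEq 0 2 3) (Ex 3 (Conj (fAtom 3 4) (fIter 2 3 1 DS 4)))))))))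
     (Conj (Neg (fCol 0 2)) (Conj (fRow 1)
        (Ex 2 (Conj (fCol 2 3) (Conj (fLenEq 0 2 3) (Ex 3 (Conj (fCol 3 4) (Conj (fColSucc 2 3 4) (Ex 4 (Conj (fAtom 4 5) (fIter 3 4 1 CS 5))))))))))))"

lemma sem_Psi:
  assumes w: "wfe e"
  shows "sat e Psi \<longleftrightarrow> e 1 = single_part (code (e 0))"
proof (cases "e 0 = []")
  case True
  then show ?thesis using w by (simp add: Psi_def code_def iscol_def single_part_def)
next
  case False
  note ne = False
  have l1: "Suc 0 \<le> length (e 0)" using ne by (cases "e 0") auto
  show ?thesis
  proof (cases "iscol (e 0)")
    case True
    have "sat e Psi \<longleftrightarrow> isrow (e 1) \<and> rv (e 1) = 2 ^ (length (e 0) - 1)"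
      using w ne True l1 by (simp add: Psi_def qsimps del: sat.simps(8,9) cong: conj_cong)
    also have "\<dots> \<longleftrightarrow> e 1 = single_part (code (e 0))"
      using w ne True by (auto simp: code_def iscol_def) (metis eq_sr wfD)+
    finally show ?thesis .
  next
    case False
    have "sat e Psi \<longleftrightarrow> isrow (e 1) \<and> rv (e 1) = itv (\<lambda>j u. nth_prime (pt (e 0) j) * u) (Suc (length (e 0))) 1 (length (e 0))"
      using w ne False l1 by (simp add: Psi_def qsimps del: sat.simps(8,9) cong: conj_cong)
    also have "\<dots> \<longleftrightarrow> isrow (e 1) \<and> rv (e 1) = prod_list (map nth_prime (e 0))"
      using itv_prod[of "e 0" "length (e 0)" "length (e 0)"] by simp
    also have "\<dots> \<longleftrightarrow> e 1 = single_part (code (e 0))"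
      using w ne False by (auto simp: code_def iscol_def) (metis eq_sr wfD)+
    finally show ?thesis .
  qed
qed

lemma fv_Bot: "fv (fBot x b) \<subseteq> {x}" by (auto simp: fBot_def)
lemma fv_Atom: "fv (fAtom x b) \<subseteq> {x}" by (auto simp: fAtom_def fBot_def)
lemma fv_Row: "fv (fRow x) \<subseteq> {x}" by (auto simp: fRow_def)
lemma fv_Col: "fv (fCol x b) \<subseteq> {x}"
  unfolding fCol_def by (auto dest!: subsetD[OF fv_Bot] subsetD[OF fv_Atom] subsetD[OF fv_Row])
lemma fv_Iff[simp]: "fv (fIff p q) = fv p \<union> fv q" by (auto simp: fIff_def)
lemma fv_Lt: "fv (fLt u v) \<subseteq> {u, v}" by (auto simp: fLt_def)

lemmas fvd0 = subsetD[OF fv_Bot] subsetD[OF fv_Atom] subsetD[OF fv_Row] subsetD[OF fv_Col] subsetD[OF fv_Lt]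

lemma fv_RowSucc: "fv (fRowSucc u v b) \<subseteq> {u, v}" unfolding fRowSucc_def by (auto dest!: fvd0)
lemma fv_ColSucc: "fv (fColSucc u v b) \<subseteq> {u, v}" unfolding fColSucc_def by (auto dest!: fvd0)
lemma fv_LenLe: "fv (fLenLe u v b) \<subseteq> {u, v}" unfolding fLenLe_def by (auto dest!: fvd0)
lemma fv_HeadLe: "fv (fHeadLe u v b) \<subseteq> {u, v}" unfolding fHeadLe_def by (auto dest!: fvd0)
lemmas fvd1 = fvd0 subsetD[OF fv_RowSucc] subsetD[OF fv_ColSucc] subsetD[OF fv_LenLe] subsetD[OF fv_HeadLe]
lemma fv_GE: "fv (fGE s c r b) \<subseteq> {s, c, r}" unfolding fGE_def by (auto dest!: fvd1)
lemmas fvd2 = fvd1 subsetD[OF fv_GE]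
lemma fv_Part: "fv (fPart s c r b) \<subseteq> {s, c, r}" unfolding fPart_def by (auto dest!: fvd2)
lemma fv_LenEq: "fv (fLenEq x c b) \<subseteq> {x, c}" unfolding fLenEq_def by (auto dest!: fvd2)
lemmas fvd3 = fvd2 subsetD[OF fv_Part] subsetD[OF fv_LenEq]

lemma fv_Seq:
  assumes "fv (R b (Suc (Suc b)) (b+3) (b+4)) \<subseteq> {b, Suc (Suc b), b+3} \<union> X"
  shows "fv (fSeq x L s R b) \<subseteq> {x, L, s} \<union> X"
  using assms unfolding fSeq_def by (auto dest!: fvd3)

lemma fv_Iter:
  assumes "fv (R (Suc b) (Suc (Suc (Suc b))) (Suc b + 3) (Suc b + 4)) \<subseteq> {Suc b, Suc (Suc (Suc b)), Suc b + 3} \<union> X"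
  shows "fv (fIter L s r R b) \<subseteq> {L, s, r} \<union> X"
proof -
  have "fv (fSeq b L s R (Suc b)) \<subseteq> {b, L, s} \<union> X" by (rule fv_Seq) (use assms in simp)
  then show ?thesis unfolding fIter_def by (auto dest!: fvd3)
qed

lemma fv_IterRS: "fv (fIter L s r RS b) \<subseteq> {L, s, r}"
  using fv_Iter[of RS b "{}" L s r] fv_RowSucc by auto
lemmas fvd4 = fvd3 subsetD[OF fv_IterRS]
lemma fv_Bridge: "fv (fBridge r L b) \<subseteq> {r, L}" unfolding fBridge_def by (auto dest!: fvd4)
lemmas fvd5 = fvd4 subsetD[OF fv_Bridge]
lemma fv_Add: "fv (fAdd a y z b) \<subseteq> {a, y, z}" unfolding fAdd_def by (auto dest!: fvd5)
lemmas fvd6 = fvd5 subsetD[OF fv_Add]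
lemma fv_IterAS: "fv (fIter L s r (AS a) b) \<subseteq> {L, s, r, a}"
  using fv_Iter[of "AS a" b "{a}" L s r] fv_Add[of a] by auto
lemma fv_IterDS: "fv (fIter L s r DS b) \<subseteq> {L, s, r}"
proof -
  have "fv (DS (Suc b) (Suc (Suc (Suc b))) (Suc b + 3) (Suc b + 4)) \<subseteq> {Suc b, Suc (Suc (Suc b)), Suc b + 3} \<union> {}"
    using fv_Add[of "Suc (Suc (Suc b))" "Suc (Suc (Suc b))" "Suc b + 3" "Suc b + 4"] by auto
  from fv_Iter[where R=DS and b=b and X="{}" and L=L and s=s and r=r, OF this] show ?thesis by simp
qed
lemmas fvd7 = fvd6 subsetD[OF fv_IterAS] subsetD[OF fv_IterDS]
lemma fv_Mult: "fv (fMult a y z b) \<subseteq> {a, y, z}" unfolding fMult_def by (auto dest!: fvd7)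
lemmas fvd8 = fvd7 subsetD[OF fv_Mult]
lemma fv_Prime: "fv (fPrime q b) \<subseteq> {q}" unfolding fPrime_def by (auto dest!: fvd8)
lemmas fvd9 = fvd8 subsetD[OF fv_Prime]
lemma fv_PL1: "fv (fPL1 y q b) \<subseteq> {y, q}" unfolding fPL1_def by (auto dest!: fvd9)
lemma fv_PL2: "fv (fPL2 y b) \<subseteq> {y}" unfolding fPL2_def by (auto dest!: fvd9)
lemma fv_PL3: "fv (fPL3 y q b) \<subseteq> {y, q}" unfolding fPL3_def by (auto dest!: fvd9)
lemmas fvd10 = fvd9 subsetD[OF fv_PL1] subsetD[OF fv_PL2] subsetD[OF fv_PL3]
lemma fv_NthPrime: "fv (fNthPrime a q b) \<subseteq> {a, q}" unfolding fNthPrime_def by (auto dest!: fvd10)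
lemmas fvd11 = fvd10 subsetD[OF fv_NthPrime]
lemma fv_CStep: "fv (fCStep i u v b) \<subseteq> {0, i, u, v}" unfolding fCStep_def by (auto dest!: fvd11)
lemma fv_IterCS: "fv (fIter L s r CS b) \<subseteq> {L, s, r, 0}"
  using fv_Iter[of CS b "{0}" L s r] fv_CStep by auto
lemmas fvd12 = fvd11 subsetD[OF fv_IterCS]

lemma fv_Psi: "fv Psi \<subseteq> {0, 1}"
  unfolding Psi_def by (auto dest!: fvd12)

theorem proposition4p3:
  shows "\<exists>\<Psi>. fv \<Psi> \<subseteq> {0, 1} \<and>
    (\<forall>e. (\<forall>v. is_partition (e v)) \<longrightarrow>
       (sat e \<Psi> \<longleftrightarrow> e 1 = single_part (code (e 0))))"
  using fv_Psi sem_Psi by (auto simp: wfe_def)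
end
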